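(* Let $A$ be an algebra over a field of characteristic zero satisfying $(x^2,x^2,x^2)=0$ for all $x\in A$, and assume $A$ has a left unit $e$ which is not a divisor of zero. Then $(xe)e=x$ for all $x\in A$.
   Context: $(x,y,z)=(xy)z-x(yz)$. A left unit $e$ satisfies $ex=x$ for all $x$. *)

theory Defs
  imports Main "HOL.Vector_Spaces"
begin

definition nonassoc_algebra ::
  "('k::field \<Rightarrow> 'v::ab_group_add \<Rightarrow> 'v) \<Rightarrow> ('v \<Rightarrow> 'v \<Rightarrow> 'v) \<Rightarrow> bool" where
  "nonassoc_algebra scale mult \<longleftrightarrow>
     vector_space scale \<and>
     (\<forall>x y z. mult (x + y) z = mult x z + mult y z) \<and>
     (\<forall>x y z. mult x (y + z) = mult x y + mult x z) \<and>
     (\<forall>c x y. mult (scale c x) y = scale c (mult x y)) \<and>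
     (\<forall>c x y. mult x (scale c y) = scale c (mult x y))"

definition associator :: "('v::ab_group_add \<Rightarrow> 'v \<Rightarrow> 'v) \<Rightarrow> 'v \<Rightarrow> 'v \<Rightarrow> 'v \<Rightarrow> 'v" where
  "associator mult x y z = mult (mult x y) z - mult x (mult y z)"

definition left_unit :: "('v \<Rightarrow> 'v \<Rightarrow> 'v) \<Rightarrow> 'v \<Rightarrow> bool" where
  "left_unit mult e \<longleftrightarrow> (\<forall>x. mult e x = x)"

definition zero_divisor :: "('v::zero \<Rightarrow> 'v \<Rightarrow> 'v) \<Rightarrow> 'v \<Rightarrow> bool" where
  "zero_divisor mult e \<longleftrightarrow> (\<exists>x. x \<noteq> 0 \<and> (mult e x = 0 \<or> mult x e = 0))"

end

theory Submission
  imports Defs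
begin

lemma poly_zero:
  fixes scale :: "'k::field_char_0 \<Rightarrow> 'v::ab_group_add \<Rightarrow> 'v"
  assumes vs: "vector_space scale"
  shows "(\<forall>t. (\<Sum>k\<le>n. scale (t^k) (c k)) = 0) \<Longrightarrow> k \<le> n \<Longrightarrow> c k = 0"
proof (induction n arbitrary: c k)
  case 0
  interpret vector_space scale by fact
  from 0 show ?case using spec[OF "0.prems"(1), of 1] by simp
next
  case (Suc n)
  interpret vector_space scale by fact
  define c' where "c' k = scale ((2::'k)^k - 2^Suc n) (c k)" for k
  have "(\<Sum>k\<le>n. scale (t^k) (c' k)) = 0" for t
  proof -
    have "(\<Sum>k\<le>n. scale (t^k) (c' k)) = (\<Sum>k\<le>Suc n. scale (t^k) (c' k))"
      by (simp add: c'_def)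
    also have "\<dots> = (\<Sum>k\<le>Suc n. scale ((2*t)^k) (c k)) - scale (2^Suc n) (\<Sum>k\<le>Suc n. scale (t^k) (c k))"
      by (simp add: c'_def scale_sum_right sum_subtractf[symmetric] scale_left_diff_distrib
          scale_right_diff_distrib power_mult_distrib algebra_simps)
    also have "\<dots> = 0" using spec[OF Suc.prems(1), of "2*t"] spec[OF Suc.prems(1), of t]
      by (simp only:) simp
    finally show ?thesis .
  qed
  hence c'0: "\<And>k. k \<le> n \<Longrightarrow> c' k = 0" using Suc.IH by blast
  have lo: "\<And>k. k \<le> n \<Longrightarrow> c k = 0"
  proof -
    fix k assume k: "k \<le> n"
    have "(2::'k)^k \<noteq> 2^Suc n"
    proof
      assume "(2::'k)^k = 2^Suc n"
      hence "(of_nat (2^k)::'k) = of_nat (2^Suc n)" by simp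
      hence "(2::nat)^k = 2^Suc n" using of_nat_eq_iff by blast
      moreover have "(2::nat)^k \<le> 2^n" using k by (rule power_increasing) simp
      ultimately show False by simp
    qed
    thus "c k = 0" using c'0[OF k] by (simp add: c'_def)
  qed
  have "(\<Sum>k\<le>Suc n. scale (1^k) (c k)) = 0" using Suc.prems(1) by blast
  hence top: "c (Suc n) = 0" using lo by simp
  show ?case using Suc.prems(2) lo top by (cases "k = Suc n") auto
qed

theorem lemma1:
  fixes scale :: "'k::field_char_0 \<Rightarrow> 'v::ab_group_add \<Rightarrow> 'v"
    and mult :: "'v \<Rightarrow> 'v \<Rightarrow> 'v"
    and e :: 'v
  assumes "nonassoc_algebra scale mult"
    and "\<forall>x. associator mult (mult x x) (mult x x) (mult x x) = 0"
    and "left_unit mult e"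
    and "\<not> zero_divisor mult e"
  shows "\<forall>x. mult (mult x e) e = x"
proof
  fix y
  have vs: "vector_space scale" using assms(1) unfolding nonassoc_algebra_def by blast
  interpret vector_space scale by (rule vs)
  have ml: "\<And>x y z. mult (x + y) z = mult x z + mult y z"
   and mr: "\<And>x y z. mult x (y + z) = mult x y + mult x z"
   and msl: "\<And>c x y. mult (scale c x) y = scale c (mult x y)"
   and msr: "\<And>c x y. mult x (scale c y) = scale c (mult x y)"
    using assms(1) unfolding nonassoc_algebra_def by blast+
  have eu: "\<And>x. mult e x = x" using assms(3) unfolding left_unit_def by blast
  have md: "mult (x - y) z = mult x z - mult y z" for x y z
  proof -
    have "mult x z = mult (x - y) z + mult y z" using ml[of "x - y" y z] by simp
    thus ?thesis by (simp add: algebra_simps)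
  qed
  have ml0: "\<And>y. mult 0 y = 0" by (metis add_cancel_right_right ml add_0)
  have mr0: "\<And>y. mult y 0 = 0" by (metis add_cancel_right_right mr add_0)
  let ?A = "associator mult"
  have A1: "\<And>x x' y z. ?A (x + x') y z = ?A x y z + ?A x' y z"
    by (simp add: associator_def ml mr)
  have A2: "\<And>x y y' z. ?A x (y + y') z = ?A x y z + ?A x y' z"
    by (simp add: associator_def ml mr)
  have A3: "\<And>x y z z'. ?A x y (z + z') = ?A x y z + ?A x y z'"
    by (simp add: associator_def ml mr)
  have S1: "\<And>c x y z. ?A (scale c x) y z = scale c (?A x y z)"
    by (simp add: associator_def msl msr scale_right_diff_distrib)
  have S2: "\<And>c x y z. ?A x (scale c y) z = scale c (?A x y z)"
    by (simp add: associator_def msl msr scale_right_diff_distrib)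
  have S3: "\<And>c x y z. ?A x y (scale c z) = scale c (?A x y z)"
    by (simp add: associator_def msl msr scale_right_diff_distrib)
  have Z1: "\<And>y z. ?A 0 y z = 0" by (simp add: associator_def ml0 mr0)
  have Z2: "\<And>y z. ?A y 0 z = 0" by (simp add: associator_def ml0 mr0)
  have Z3: "\<And>y z. ?A y z 0 = 0" by (simp add: associator_def ml0 mr0)
  have Sum1: "?A (\<Sum>i\<in>I. f i) y z = (\<Sum>i\<in>I. ?A (f i) y z)" for f :: "nat \<Rightarrow> 'v" and I y z
    by (induction I rule: infinite_finite_induct) (simp_all add: Z1 A1)
  have Sum2: "?A y (\<Sum>i\<in>I. f i) z = (\<Sum>i\<in>I. ?A y (f i) z)" for f :: "nat \<Rightarrow> 'v" and I y z
    by (induction I rule: infinite_finite_induct) (simp_all add: Z2 A2)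
  have Sum3: "?A y z (\<Sum>i\<in>I. f i) = (\<Sum>i\<in>I. ?A y z (f i))" for f :: "nat \<Rightarrow> 'v" and I y z
    by (induction I rule: infinite_finite_induct) (simp_all add: Z3 A3)
  define u where "u = y + mult y e"
  define a where "a i = (if i = 0 then e else if i = 1 then u else mult y y)" for i :: nat
  define c where "c k = (\<Sum>i\<le>2. \<Sum>j\<le>2. \<Sum>l\<le>2.
      if k = i + j + l then ?A (a l) (a j) (a i) else 0)" for k
  have "(\<Sum>k\<le>6. scale (t^k) (c k)) = 0" for t
  proof -
    define x where "x = e + scale t y"
    have sq: "mult x x = (\<Sum>i\<le>2. scale (t^i) (a i))"
      by (simp add: x_def ml mr msl msr eu a_def u_def numeral_2_eq_2 power2_eq_square
          scale_right_distrib algebra_simps)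
    have "?A (mult x x) (mult x x) (mult x x) =
       (\<Sum>i\<le>2. \<Sum>j\<le>2. \<Sum>l\<le>2. scale (t^(i+j+l)) (?A (a l) (a j) (a i)))"
      unfolding sq Sum1 Sum2 Sum3 S1 S2 S3 scale_sum_right
      by (simp add: power_add mult_ac)
    also have "\<dots> = (\<Sum>i\<le>2. \<Sum>j\<le>2. \<Sum>l\<le>2. \<Sum>k\<le>6.
         if k = i + j + l then scale (t^k) (?A (a l) (a j) (a i)) else 0)"
    proof -
      have "\<And>i j l. i \<le> 2 \<Longrightarrow> j \<le> 2 \<Longrightarrow> l \<le> 2 \<Longrightarrow>
         scale (t^(i+j+l)) (?A (a l) (a j) (a i)) = (\<Sum>k\<le>6.
         if k = i + j + l then scale (t^k) (?A (a l) (a j) (a i)) else 0)"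
        by (subst sum.delta) auto
      thus ?thesis by (intro sum.cong refl) auto
    qed
    also have "\<dots> = (\<Sum>k\<le>6. \<Sum>i\<le>2. \<Sum>j\<le>2. \<Sum>l\<le>2.
         if k = i + j + l then scale (t^k) (?A (a l) (a j) (a i)) else 0)"
      by (simp only: sum.swap[where B="{..6::nat}"])
    also have "\<dots> = (\<Sum>k\<le>6. scale (t^k) (c k))"
      unfolding c_def scale_sum_right
      by (intro sum.cong refl) (simp add: if_distrib)
    finally show ?thesis using assms(2) by simp
  qed
  hence c1: "c 1 = 0" using poly_zero[OF vs, where n=6 and c=c and k=1] by simp
  have "c 1 = ?A u e e + ?A e u e + ?A e e u"
  proof -
    have r: "{..2::nat} = {0,1,2}" by auto
    show ?thesis unfolding c_def r by (simp add: a_def)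
  qed
  hence "?A u e e = 0" using c1 by (simp add: associator_def eu)
  hence "mult (mult u e) e = mult u e" by (simp add: associator_def eu)
  hence "mult (mult (mult y e) e) e = mult y e"
    by (simp add: u_def ml)
  hence "mult (mult (mult y e) e - y) e = 0"
    by (simp add: md)
  with assms(4) have "mult (mult y e) e - y = 0" unfolding zero_divisor_def by blast
  thus "mult (mult y e) e = y" by simp
qed
end
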